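(* Let $M$ be a finite index set with positive, not necessarily normalized, weights $w^r>0$ for $r\in M$. Put $\eta=\sum_{r\in M}w^r$ and $\mathcal{H}=-\sum_{r\in M}\frac{w^r}{\eta}\log\big(\frac{w^r}{\eta}\big)$. Let $M^s\subseteq M$ be nonempty with $|\neg M^s|>2$, where $\neg M^s=M\setminus M^s$. Define $w^{m,s}=\sum_{m\in M^s}w^m$, $w^{s,r}=w^r/w^{m,s}$ for $r\in M^s$, and $\mathcal{H}^s=-\sum_{r\in M^s}w^{s,r}\log(w^{s,r})$. Let $\mathcal{LB}[\eta]$ and $\mathcal{UB}[\eta]$ be real numbers with $0<\mathcal{LB}[\eta]\le\eta\le\mathcal{UB}[\eta]$, and set $$\bar\gamma=1-\sum_{r\in M^s}\frac{w^r}{\mathcal{UB}[\eta]}.$$ Then $\mathcal{LB}[\mathcal{H}]\le\mathcal{H}\le\mathcal{UB}[\mathcal{H}]$, where $$\mathcal{LB}[\mathcal{H}]=\frac{w^{m,s}}{\mathcal{UB}[\eta]}\Big[\mathcal{H}^s+\log\Big(\frac{\mathcal{LB}[\eta]}{w^{m,s}}\Big)\Big],$$ $$\mathcal{UB}[\mathcal{H}]=\frac{w^{m,s}}{\mathcal{LB}[\eta]}\Big[\mathcal{H}^s+\log\Big(\frac{\mathcal{UB}[\eta]}{w^{m,s}}\Big)\Big]-\bar\gamma\log\Big(\frac{\bar\gamma}{|\neg M^s|}\Big).$$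
   Context: Setting: a node of a planning belief tree holds a mixture belief with component set $M$ (data-association hypotheses) and unnormalized weights $w^r$. The cost $\mathcal{H}$ is the Shannon entropy of the normalized weights. The subset $M^s$ defines a simplified belief with renormalized weights $w^{s,r}$ and entropy $\mathcal{H}^s$. Computing $\eta$ requires all weights, so only lower and upper bounds $\mathcal{LB}[\eta]$ and $\mathcal{UB}[\eta]$ on it are assumed to be available. All logarithms use the same base. *)

theory Defs
  imports "HOL-Analysis.Analysis"
begin

end

theory Submission
  imports Defs
begin

lemma log_le_lin:
  fixes b x :: real
  assumes "b > 1" "x > 0"
  shows "log b x \<le> (x - 1) / ln b"
proof -
  have "ln b > 0" using assms by simp
  moreover have "ln x \<le> x - 1" using assms ln_le_minus_one by blast
  ultimately show ?thesis unfolding log_def by (simp add: divide_right_mono)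
qed

lemma g_mono:
  fixes b x y n :: real
  assumes "b > 1" "n \<ge> 3" "0 < x" "x \<le> y" "y \<le> 1"
  shows "- x * log b (x / n) \<le> - y * log b (y / n)"
proof -
  have lb: "ln b > 0" using assms by simp
  have yp: "y > 0" using assms by linarith
  have np: "n > 0" using assms by linarith
  have a1: "ln (x / y) \<ge> 1 - y / x"
  proof -
    have "ln (y / x) \<le> y / x - 1" using ln_le_minus_one assms yp by simp
    moreover have "ln (x / y) = - ln (y / x)" using assms yp
      by (simp add: ln_div)
    ultimately show ?thesis by linarith
  qed
  have a2: "x * ln (x / y) \<ge> x - y"
  proof -
    have "x * ln (x / y) \<ge> x * (1 - y / x)" using a1 assms by (simp add: mult_left_mono)
    also have "x * (1 - y / x) = x - y" using assms by (simp add: field_simps)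
    finally show ?thesis .
  qed
  have e: "ln (n / y) \<ge> 1"
  proof -
    have "n / y \<ge> 3" using assms yp by (simp add: field_simps)
    hence "n / y \<ge> exp 1" using exp_le by linarith
    hence "ln (n / y) \<ge> ln (exp 1)" using ln_le_cancel_iff by (smt (verit) exp_gt_zero)
    thus ?thesis by simp
  qed
  have eq1: "ln (x / n) = ln (x / y) + ln (y / n)" using assms yp np by (simp add: ln_div)
  have eq2: "ln (y / n) = - ln (n / y)" using yp np by (simp add: ln_div)
  have "- x * ln (x / n) \<le> - y * ln (y / n)"
  proof -
    have "- x * ln (x / n) = - x * (ln (x / y) - ln (n / y))" using eq1 eq2 by simp
    also have "\<dots> = - x * ln (x / y) + x * ln (n / y)" by (simp add: algebra_simps)
    also have "\<dots> \<le> (y - x) + x * ln (n / y)" using a2 by linarith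
    also have "\<dots> \<le> (y - x) * ln (n / y) + x * ln (n / y)"
      using mult_left_mono[OF e, of "y - x"] assms by simp
    also have "\<dots> = - y * ln (y / n)" using eq2 by (simp add: algebra_simps)
    finally show ?thesis .
  qed
  thus ?thesis unfolding log_def using lb by (simp add: divide_right_mono)
qed

theorem theorem2:
  fixes M Ms :: "'a set" and w :: "'a \<Rightarrow> real" and b LB_eta UB_eta :: real
  assumes "finite M"
    and "\<And>r. r \<in> M \<Longrightarrow> w r > 0"
    and "b > 1"
    and "Ms \<subseteq> M" and "Ms \<noteq> {}"
    and "card (M - Ms) > 2"
    and "0 < LB_eta" and "LB_eta \<le> (\<Sum>r\<in>M. w r)" and "(\<Sum>r\<in>M. w r) \<le> UB_eta"
  shows
    "let \<eta> = (\<Sum>r\<in>M. w r);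
         H = - (\<Sum>r\<in>M. (w r / \<eta>) * log b (w r / \<eta>));
         wms = (\<Sum>m\<in>Ms. w m);
         Hs = - (\<Sum>r\<in>Ms. (w r / wms) * log b (w r / wms));
         \<gamma> = 1 - (\<Sum>r\<in>Ms. w r / UB_eta);
         LB_H = wms / UB_eta * (Hs + log b (LB_eta / wms));
         UB_H = wms / LB_eta * (Hs + log b (UB_eta / wms))
                - \<gamma> * log b (\<gamma> / real (card (M - Ms)))
     in LB_H \<le> H \<and> H \<le> UB_H"
proof -
  define \<eta> where "\<eta> = (\<Sum>r\<in>M. w r)"
  define W where "W = (\<Sum>m\<in>Ms. w m)"
  define N where "N = M - Ms"
  define n where "n = real (card N)"
  define Hs where "Hs = - (\<Sum>r\<in>Ms. (w r / W) * log b (w r / W))"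
  define E where "E = - (\<Sum>r\<in>N. (w r / \<eta>) * log b (w r / \<eta>))"
  define gt where "gt = (\<Sum>r\<in>N. w r / \<eta>)"
  define gb where "gb = 1 - (\<Sum>r\<in>Ms. w r / UB_eta)"
  have finMs: "finite Ms" using assms(1,4) finite_subset by blast
  have finN: "finite N" unfolding N_def using assms(1) by simp
  have Nne: "N \<noteq> {}" using assms(6) unfolding N_def by (metis card.empty less_zeroE)
  have n3: "n \<ge> 3" using assms(6) unfolding n_def N_def by simp
  have wpos: "\<And>r. r \<in> M \<Longrightarrow> w r > 0" using assms(2) by blast
  have Wpos: "W > 0" unfolding W_def using finMs assms(5) assms(4) wpos
    by (meson subsetD sum_pos)
  have splitM: "\<eta> = W + (\<Sum>r\<in>N. w r)" unfolding \<eta>_def W_def N_def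
    using sum.subset_diff[OF assms(4) assms(1), of w] by linarith
  have sNpos: "(\<Sum>r\<in>N. w r) > 0" using finN Nne wpos unfolding N_def
    by (meson DiffD1 sum_pos)
  have etapos: "\<eta> > 0" using splitM Wpos sNpos by linarith
  have Wle: "W < \<eta>" using splitM sNpos by linarith
  have lb: "ln b > 0" using assms(3) by simp
  have sumMsplit: "(\<Sum>r\<in>M. (w r / \<eta>) * log b (w r / \<eta>))
      = (\<Sum>r\<in>Ms. (w r / \<eta>) * log b (w r / \<eta>)) + (\<Sum>r\<in>N. (w r / \<eta>) * log b (w r / \<eta>))"
    unfolding N_def using sum.subset_diff[OF assms(4) assms(1), of "\<lambda>r. (w r / \<eta>) * log b (w r / \<eta>)"] by linarith
  have msum: "(\<Sum>r\<in>Ms. (w r / \<eta>) * log b (w r / \<eta>))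
      = (W / \<eta>) * (\<Sum>r\<in>Ms. (w r / W) * log b (w r / W)) - (W / \<eta>) * log b (\<eta> / W)"
  proof -
    have "(\<Sum>r\<in>Ms. (w r / \<eta>) * log b (w r / \<eta>))
        = (\<Sum>r\<in>Ms. (W / \<eta>) * ((w r / W) * log b (w r / W)) - (w r / \<eta>) * log b (\<eta> / W))"
    proof (rule sum.cong[OF refl])
      fix r assume r: "r \<in> Ms"
      hence wr: "w r > 0" using assms(4) wpos by blast
      have "log b (w r / \<eta>) = log b (w r / W) - log b (\<eta> / W)"
        using wr Wpos etapos assms(3) by (simp add: log_divide)
      hence "(w r / \<eta>) * log b (w r / \<eta>) = (w r / \<eta>) * log b (w r / W) - (w r / \<eta>) * log b (\<eta> / W)"
        by (simp add: right_diff_distrib)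
      also have "(w r / \<eta>) * log b (w r / W) = (W / \<eta>) * ((w r / W) * log b (w r / W))"
      proof -
        have "W / \<eta> * (w r / W) = w r / \<eta>" using Wpos by simp
        thus ?thesis by (metis mult.assoc)
      qed
      finally show "(w r / \<eta>) * log b (w r / \<eta>) = (W / \<eta>) * ((w r / W) * log b (w r / W)) - (w r / \<eta>) * log b (\<eta> / W)" .
    qed
    also have "\<dots> = (W / \<eta>) * (\<Sum>r\<in>Ms. (w r / W) * log b (w r / W)) - (\<Sum>r\<in>Ms. w r / \<eta>) * log b (\<eta> / W)"
      by (simp only: sum_subtractf sum_distrib_left[symmetric] sum_distrib_right[symmetric])
    also have "(\<Sum>r\<in>Ms. w r / \<eta>) = W / \<eta>" unfolding W_def by (simp add: sum_divide_distrib)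
    finally show ?thesis .
  qed
  have decomp: "- (\<Sum>r\<in>M. (w r / \<eta>) * log b (w r / \<eta>)) = W / \<eta> * (Hs + log b (\<eta> / W)) + E"
  proof -
    have d1: "W / \<eta> * (Hs + log b (\<eta> / W)) = W / \<eta> * Hs + W / \<eta> * log b (\<eta> / W)"
      by (rule distrib_left)
    have d2: "W / \<eta> * Hs = - (W / \<eta> * (\<Sum>r\<in>Ms. (w r / W) * log b (w r / W)))"
      unfolding Hs_def by (rule mult_minus_right)
    show ?thesis unfolding sumMsplit msum using d1 d2 E_def by linarith
  qed
  have Hs0: "Hs \<ge> 0"
  proof -
    have "(\<Sum>r\<in>Ms. (w r / W) * log b (w r / W)) \<le> 0"
    proof (rule sum_nonpos)
      fix r assume r: "r \<in> Ms"
      hence wr: "w r > 0" using assms(4) wpos by blast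
      have "w r \<le> W" unfolding W_def
      proof (rule member_le_sum[OF r _ finMs])
        fix x assume "x \<in> Ms - {r}"
        thus "0 \<le> w x" using assms(4) wpos by (meson DiffD1 less_imp_le subsetD)
      qed
      hence "log b (w r / W) \<le> 0" using wr Wpos assms(3) by (simp add: log_le_zero_cancel_iff)
      thus "(w r / W) * log b (w r / W) \<le> 0" using wr Wpos mult_nonneg_nonpos[of "w r / W" "log b (w r / W)"] by simp
    qed
    thus ?thesis unfolding Hs_def by simp
  qed
  have E0: "E \<ge> 0"
  proof -
    have "(\<Sum>r\<in>N. (w r / \<eta>) * log b (w r / \<eta>)) \<le> 0"
    proof (rule sum_nonpos)
      fix r assume r: "r \<in> N"
      hence wr: "w r > 0" using wpos unfolding N_def by blast
      have "w r \<le> \<eta>" unfolding \<eta>_def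
      proof (rule member_le_sum[OF _ _ assms(1)])
        show "r \<in> M" using r unfolding N_def by blast
        fix x assume "x \<in> M - {r}"
        thus "0 \<le> w x" using wpos by (meson DiffD1 less_imp_le)
      qed
      hence "log b (w r / \<eta>) \<le> 0" using wr etapos assms(3) by (simp add: log_le_zero_cancel_iff)
      thus "(w r / \<eta>) * log b (w r / \<eta>) \<le> 0" using wr etapos mult_nonneg_nonpos[of "w r / \<eta>" "log b (w r / \<eta>)"] by simp
    qed
    thus ?thesis unfolding E_def by simp
  qed
  have logeW: "log b (\<eta> / W) \<ge> 0" using Wle Wpos assms(3) by simp
  have gt_eq: "gt = 1 - W / \<eta>" unfolding gt_def using splitM etapos
    by (simp add: sum_divide_distrib[symmetric] field_simps)
  have gtpos: "gt > 0" unfolding gt_def using sNpos etapos by (simp add: sum_divide_distrib[symmetric])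
  have gb_eq: "gb = 1 - W / UB_eta" unfolding gb_def W_def by (simp add: sum_divide_distrib)
  have UBpos: "UB_eta > 0" using etapos assms(9) \<eta>_def by linarith
  have gt_gb: "gt \<le> gb" unfolding gt_eq gb_eq using Wpos etapos assms(9) \<eta>_def
    by (simp add: frac_le)
  have gb1: "gb \<le> 1" unfolding gb_eq using Wpos UBpos by simp
  have Emax: "E \<le> - gt * log b (gt / n)"
  proof -
    define q where "q = gt / n"
    have qpos: "q > 0" unfolding q_def using gtpos n3 by simp
    have "(\<Sum>r\<in>N. (w r / \<eta>) * (log b q - log b (w r / \<eta>))) \<le> (\<Sum>r\<in>N. (q - w r / \<eta>) / ln b)"
    proof (rule sum_mono)
      fix r assume r: "r \<in> N"
      hence wr: "w r > 0" using wpos unfolding N_def by blast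
      define p where "p = w r / \<eta>"
      have pp: "p > 0" unfolding p_def using wr etapos by simp
      have "log b q - log b p = log b (q / p)" using qpos pp assms(3) by (simp add: log_divide)
      also have "\<dots> \<le> (q / p - 1) / ln b" using log_le_lin assms(3) qpos pp by simp
      finally have "p * (log b q - log b p) \<le> p * ((q / p - 1) / ln b)" using pp by (intro mult_left_mono) simp_all
      also have "\<dots> = (q - p) / ln b" using pp lb by (simp add: field_simps)
      finally show "(w r / \<eta>) * (log b q - log b (w r / \<eta>)) \<le> (q - w r / \<eta>) / ln b" unfolding p_def .
    qed
    also have "\<dots> = (n * q - gt) / ln b" unfolding gt_def n_def
      by (simp add: sum_divide_distrib[symmetric] sum_subtractf)
    also have "n * q = gt" unfolding q_def using n3 by simp
    finally have "(\<Sum>r\<in>N. (w r / \<eta>) * (log b q - log b (w r / \<eta>))) \<le> 0" by simp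
    moreover have "(\<Sum>r\<in>N. (w r / \<eta>) * (log b q - log b (w r / \<eta>)))
        = gt * log b q + E" unfolding E_def gt_def
      by (simp only: right_diff_distrib sum_subtractf sum_distrib_right[symmetric])
    ultimately show ?thesis unfolding q_def by simp
  qed
  have gmono: "- gt * log b (gt / n) \<le> - gb * log b (gb / n)"
    using g_mono[OF assms(3) n3 gtpos gt_gb gb1] .
  have lower: "W / UB_eta * (Hs + log b (LB_eta / W)) \<le> W / \<eta> * (Hs + log b (\<eta> / W))"
  proof (cases "Hs + log b (LB_eta / W) \<ge> 0")
    case True
    have "log b (LB_eta / W) \<le> log b (\<eta> / W)" using assms(7,8) Wpos assms(3) \<eta>_def
      by (simp add: divide_right_mono)
    hence h1: "Hs + log b (LB_eta / W) \<le> Hs + log b (\<eta> / W)" by simp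
    have h2: "W / UB_eta \<le> W / \<eta>" using Wpos etapos assms(9) \<eta>_def by (simp add: frac_le)
    show ?thesis using mult_mono[OF h2 h1] True etapos Wpos by simp
  next
    case False
    hence "W / UB_eta * (Hs + log b (LB_eta / W)) \<le> 0" using Wpos UBpos
      by (intro mult_nonneg_nonpos) simp_all
    moreover have "W / \<eta> * (Hs + log b (\<eta> / W)) \<ge> 0" using Wpos etapos Hs0 logeW by simp
    ultimately show ?thesis by linarith
  qed
  have upper: "W / \<eta> * (Hs + log b (\<eta> / W)) \<le> W / LB_eta * (Hs + log b (UB_eta / W))"
  proof -
    have "log b (\<eta> / W) \<le> log b (UB_eta / W)" using assms(9) Wpos etapos assms(3) \<eta>_def
      by (simp add: divide_right_mono)
    hence h1: "Hs + log b (\<eta> / W) \<le> Hs + log b (UB_eta / W)" by simp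
    have h2: "W / \<eta> \<le> W / LB_eta" using Wpos assms(7,8) \<eta>_def by (simp add: frac_le)
    show ?thesis using mult_mono[OF h2 h1] Hs0 logeW Wpos assms(7) by simp
  qed
  show ?thesis unfolding Let_def
    using decomp lower upper Emax gmono E0
    unfolding \<eta>_def[symmetric] W_def[symmetric] Hs_def[symmetric] gb_def[symmetric] N_def[symmetric] n_def[symmetric]
    by linarith
qed

end
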